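(* For every $\delta>0$ there exist $C>0$ and a sequence $(\varepsilon_j)_{j\in\mathbb N}$ in $(0,1)$ with $\varepsilon_j\to0$, $\varepsilon_j/2\le\varepsilon_{j+1}\le\varepsilon_j$ for all $j$, and such that for all $j\in\mathbb N$ and all integers $n\ge1$, $$\phi_n^j:=\inf\{|\varepsilon_j-p/n|:\ p\in\mathbb Z\}\ \ge\ C\,\varepsilon_j\,e^{-n^2\pi^2\delta}.$$ *)

theory Defs
  imports Complex_Main
begin

end

theory Submission
  imports Defs
begin

lemma sq2_nat: "(m::nat)^2 = 2*n^2 \<Longrightarrow> n = 0"
proof (induction n arbitrary: m rule: less_induct)
  case (less n)
  show ?case
  proof (rule ccontr)
    assume n0: "n \<noteq> 0"
    have "even (m^2)" using less.prems by simp
    then obtain k where k: "m = 2*k" by auto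
    hence "n^2 = 2*k^2" using less.prems by (simp add: power2_eq_square)
    then have "even (n^2)" by simp
    then obtain l where l: "n = 2*l" by auto
    hence "k^2 = 2*l^2" using \<open>n^2 = 2*k^2\<close> by (simp add: power2_eq_square)
    moreover have "l < n" using l n0 by simp
    ultimately have "l = 0" using less.IH by blast
    thus False using l n0 by simp
  qed
qed

lemma sq2_int: "n \<ge> 1 \<Longrightarrow> (m::int)^2 \<noteq> 2*(int n)^2"
proof
  assume "n \<ge> 1" "m^2 = 2*(int n)^2"
  hence "int ((nat \<bar>m\<bar>)^2) = int (2*n^2)" by simp
  hence "(nat \<bar>m\<bar>)^2 = 2*n^2" by (simp only: of_nat_eq_iff)
  thus False using sq2_nat \<open>n \<ge> 1\<close> by fastforce
qed

lemma approx_sqrt2: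
  assumes "n \<ge> (1::nat)"
  shows "\<bar>sqrt 2 - real_of_int m / real n\<bar> \<ge> 1 / (5 * real n ^ 2)"
proof (cases "\<bar>sqrt 2 - real_of_int m / real n\<bar> \<ge> 1")
  case True
  have "real n ^ 2 \<ge> 1" using assms by simp
  hence "1 / (5 * real n ^ 2) \<le> 1" by (simp add: divide_le_eq)
  then show ?thesis using True by linarith
next
  case False
  have s2: "sqrt 2 < 2" by (rule sqrt2_less_2)
  have s0: "sqrt 2 \<ge> 0" by simp
  have b: "\<bar>sqrt 2 + real_of_int m / real n\<bar> < 5"
  proof -
    define y where "y = real_of_int m / real n"
    have "\<bar>sqrt 2 - y\<bar> < 1" using False y_def by simp
    hence "\<bar>sqrt 2 + y\<bar> < 5" using s2 s0 by linarith
    thus ?thesis using y_def by simp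
  qed
  have npos: "real n > 0" using assms by simp
  have "(sqrt 2 - real_of_int m / real n) * (sqrt 2 + real_of_int m / real n)
        = (2 * real n ^ 2 - real_of_int m ^ 2) / real n ^ 2"
    using npos by (simp add: field_simps power2_eq_square)
  moreover have "\<bar>2 * real n ^ 2 - real_of_int m ^ 2\<bar> \<ge> 1"
  proof -
    have "2 * int n ^ 2 - m ^ 2 \<noteq> 0" using sq2_int[OF assms, of m] by simp
    hence "\<bar>2 * int n ^ 2 - m ^ 2\<bar> \<ge> 1" by linarith
    hence "real_of_int \<bar>2 * int n ^ 2 - m ^ 2\<bar> \<ge> 1" by linarith
    thus ?thesis by simp
  qed
  ultimately have "\<bar>sqrt 2 - real_of_int m / real n\<bar> * \<bar>sqrt 2 + real_of_int m / real n\<bar> \<ge> 1 / real n ^ 2"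
    using npos by (simp add: abs_mult[symmetric] abs_divide divide_right_mono)
  also have "\<bar>sqrt 2 - real_of_int m / real n\<bar> * \<bar>sqrt 2 + real_of_int m / real n\<bar>
      \<le> \<bar>sqrt 2 - real_of_int m / real n\<bar> * 5"
    using b by (intro mult_left_mono) auto
  finally show ?thesis using npos by (simp add: field_simps)
qed

lemma key_bound:
  assumes n: "n \<ge> (1::nat)" and a: "a > 0"
  shows "\<bar>sqrt 2 / 2 / 2^j - real_of_int p / real n\<bar>
         \<ge> a / 10 * (sqrt 2 / 2 / 2^j) * exp (- (real n ^ 2 * a))"
proof -
  define m where "m = 2 * 2^j * p"
  have npos: "real n > 0" using n by simp
  have eq: "\<bar>sqrt 2 / 2 / 2^j - real_of_int p / real n\<bar>
      = \<bar>sqrt 2 - real_of_int m / real n\<bar> / (2 * 2^j)"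
  proof -
    have "sqrt 2 / 2 / 2^j - real_of_int p / real n
        = (sqrt 2 - real_of_int m / real n) / (2 * 2^j)"
      using npos by (simp add: m_def field_simps)
    thus ?thesis by (simp add: abs_divide)
  qed
  have h1: "\<bar>sqrt 2 - real_of_int m / real n\<bar> / (2 * 2^j) \<ge> 1 / (5 * real n ^ 2) / (2 * 2^j)"
    using approx_sqrt2[OF n, of m] by (intro divide_right_mono) auto
  have e: "a * real n ^ 2 \<le> exp (real n ^ 2 * a)"
    using exp_ge_add_one_self[of "real n ^ 2 * a"] by (simp add: mult.commute del: exp_ge_add_one_self)
  have e2: "a * exp (- (real n ^ 2 * a)) \<le> 1 / real n ^ 2"
  proof -
    have "a * exp (- (real n ^ 2 * a)) = a / exp (real n ^ 2 * a)" by (simp add: exp_minus field_simps)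
    also have "\<dots> \<le> 1 / real n ^ 2" using e npos by (simp add: field_simps)
    finally show ?thesis .
  qed
  have s2: "sqrt 2 / 2 \<le> 1" using sqrt2_less_2 by simp
  have "a / 10 * (sqrt 2 / 2 / 2^j) * exp (- (real n ^ 2 * a))
      = (sqrt 2 / 2) * (a * exp (- (real n ^ 2 * a))) / (10 * 2^j)" by (simp add: field_simps)
  also have "\<dots> \<le> 1 * (1 / real n ^ 2) / (10 * 2^j)"
    using s2 e2 a by (intro divide_right_mono mult_mono) auto
  also have "\<dots> = 1 / (5 * real n ^ 2) / (2 * 2^j)" by simp
  finally show ?thesis using eq h1 by linarith
qed

theorem lemma3:
  fixes \<delta> :: real
  assumes "\<delta> > 0"
  shows "\<exists>C::real. C > 0 \<and> (\<exists>\<epsilon>::nat \<Rightarrow> real.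
           (\<forall>j. 0 < \<epsilon> j \<and> \<epsilon> j < 1) \<and>
           \<epsilon> \<longlonglongrightarrow> 0 \<and>
           (\<forall>j. \<epsilon> j / 2 \<le> \<epsilon> (Suc j) \<and> \<epsilon> (Suc j) \<le> \<epsilon> j) \<and>
           (\<forall>j. \<forall>n::nat. n \<ge> 1 \<longrightarrow>
              (INF p\<in>(UNIV::int set). \<bar>\<epsilon> j - real_of_int p / real n\<bar>)
                \<ge> C * \<epsilon> j * exp (- (real n ^ 2 * pi ^ 2 * \<delta>))))"
proof -
  define a where "a = pi ^ 2 * \<delta>"
  have apos: "a > 0" using assms by (simp add: a_def)
  define e where "e = (\<lambda>j::nat. sqrt 2 / 2 / 2^j)"
  have s2: "sqrt 2 < 2" by (rule sqrt2_less_2)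
  have p1: "\<forall>j. 0 < e j \<and> e j < 1"
  proof
    fix j
    have pj: "(2::real)^j \<ge> 1" by simp
    hence "sqrt 2 / 2 / 2^j \<le> sqrt 2 / 2" by (simp add: divide_le_eq field_simps)
    moreover have "(0::real) < 2^j" by simp
    moreover have "sqrt 2 > 0" by simp
    ultimately have "sqrt 2 / 2 / 2^j > 0" by simp
    moreover have "sqrt 2 / 2 / 2^j < 1"
      using s2 \<open>sqrt 2 / 2 / 2^j \<le> sqrt 2 / 2\<close> by linarith
    ultimately have "sqrt 2 / 2 / 2^j > 0 \<and> sqrt 2 / 2 / 2^j < 1" by blast
    thus "0 < e j \<and> e j < 1" by (simp add: e_def)
  qed
  have p2: "e \<longlonglongrightarrow> 0" unfolding e_def by (rule LIMSEQ_divide_realpow_zero) simp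
  have p3: "\<forall>j. e j / 2 \<le> e (Suc j) \<and> e (Suc j) \<le> e j"
    by (simp add: e_def field_simps)
  have p4: "\<forall>j. \<forall>n::nat. n \<ge> 1 \<longrightarrow>
              (INF p\<in>(UNIV::int set). \<bar>e j - real_of_int p / real n\<bar>)
                \<ge> a / 10 * e j * exp (- (real n ^ 2 * pi ^ 2 * \<delta>))"
  proof (intro allI impI)
    fix j and n :: nat assume n: "n \<ge> 1"
    show "(INF p\<in>(UNIV::int set). \<bar>e j - real_of_int p / real n\<bar>)
                \<ge> a / 10 * e j * exp (- (real n ^ 2 * pi ^ 2 * \<delta>))"
    proof (rule cINF_greatest)
      fix p :: int
      show "a / 10 * e j * exp (- (real n ^ 2 * pi ^ 2 * \<delta>)) \<le> \<bar>e j - real_of_int p / real n\<bar>"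
        using key_bound[OF n apos, of j p] by (simp add: e_def a_def mult.assoc)
    qed simp
  qed
  show ?thesis
    apply (rule exI[of _ "a / 10"])
    apply (intro conjI)
    using apos apply simp
    apply (rule exI[of _ e])
    using p1 p2 p3 p4 by blast
qed

end
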